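(* Let $\mathfrak l$ be a real finite-dimensional nilpotent Lie algebra with $\dim\mathfrak l'=2$ and $\mathfrak l'\subset\mathfrak z(\mathfrak l)$ which is admissible, and let $\bar{\mathfrak l}\subset\mathfrak l$ be a 3-dimensional subspace with $[\bar{\mathfrak l},\bar{\mathfrak l}]=\mathfrak l'$. Then $[L_1,L_2]=0$ for all $L_1,L_2\in\mathfrak l$ satisfying $[L_1,\bar{\mathfrak l}]=[L_2,\bar{\mathfrak l}]=0$.
   Context: For a Lie algebra $\mathfrak l$: $\mathfrak l^1=\mathfrak l$, $\mathfrak l^{k+1}=[\mathfrak l,\mathfrak l^k]$, $\mathfrak l'=\mathfrak l^2$, $\mathfrak z(\mathfrak l)$ the centre. An orthogonal $\mathfrak l$-module $(\rho,\mathfrak a)$ is a finite-dimensional real vector space with a nondegenerate symmetric bilinear form $\langle\cdot,\cdot\rangle_{\mathfrak a}$ and a representation by skew-adjoint maps. $C^p(\mathfrak l,\mathfrak a)$: alternating $p$-linear maps with Chevalley–Eilenberg differential $d$; $C^p(\mathfrak l)=C^p(\mathfrak l,\mathbb R)$; $\langle\alpha\wedge\beta\rangle$ is the wedge product followed by contraction with $\langle\cdot,\cdot\rangle_{\mathfrak a}$. $\mathcal Z^2_Q(\mathfrak l,\mathfrak a)=\{(\alpha,\gamma)\in C^2(\mathfrak l,\mathfrak a)\oplus C^3(\mathfrak l): d\alpha=0,d\gamma=\frac12\langle\alpha\wedge\alpha\rangle\}$; the group $C^1(\mathfrak l,\mathfrak a)\oplus C^2(\mathfrak l)$ with $(\tau_1,\sigma_1)*(\tau_2,\sigma_2)=(\tau_1+\tau_2,\sigma_1+\sigma_2+\frac12\langle\tau_1\wedge\tau_2\rangle)$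 acts by $(\alpha,\gamma)(\tau,\sigma)=(\alpha+d\tau,\gamma+d\sigma+\langle(\alpha+\frac12d\tau)\wedge\tau\rangle)$; $\mathcal H^2_Q(\mathfrak l,\mathfrak a)$ is the orbit set. Admissibility: for nilpotent $\mathfrak l$ and semisimple $(\rho,\mathfrak a)$, with $\mathfrak l^{m+2}=0$, $\mathfrak l_{(0)}=\mathfrak z(\mathfrak l)\cap\ker\rho$, $\mathfrak l_{(k)}=\mathfrak z(\mathfrak l)\cap\mathfrak l^{k+1}$ ($k\ge1$), and a representative with $\alpha(\mathfrak l,\mathfrak l)\subset\mathfrak a^{\mathfrak l}$, a class is admissible iff for all $0\le k\le m$: $(A_k)$ whenever $L_0\in\mathfrak l_{(k)}$ and there are $A_0\in\mathfrak a$, $Z_0\in(\mathfrak l^{k+1})^*$ with $\alpha(L,L_0)=0$ and $\gamma(L,L_0,\cdot)=-\langle A_0,\alpha(L,\cdot)\rangle_{\mathfrak a}+\langle Z_0,[L,\cdot]\rangle$ on $\mathfrak l^{k+1}$ for all $L$, then $L_0=0$; $(B_k)$ $\alpha$ applied to the kernel of the bracket map $\mathfrak l\otimes\mathfrak l^{k+1}\to\mathfrak l$ is a nondegenerate subspace of $\mathfrak a$. $\mathfrak l$ is admissible if some semisimple orthogonal module $\mathfrak a$ admits an admissible class in $\mathcal H^2_Q(\mathfrak l,\mathfrak a)$. *)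

theory Defs
  imports "HOL-Analysis.Analysis"
begin

definition bilin :: "('a::real_vector \<Rightarrow> 'a \<Rightarrow> 'b::real_vector) \<Rightarrow> bool" where
  "bilin f \<longleftrightarrow> (\<forall>x. linear (\<lambda>y. f x y)) \<and> (\<forall>y. linear (\<lambda>x. f x y))"

definition lie_algebra :: "('l::real_vector \<Rightarrow> 'l \<Rightarrow> 'l) \<Rightarrow> bool" where
  "lie_algebra br \<longleftrightarrow> bilin br \<and> (\<forall>x. br x x = 0) \<and>
     (\<forall>x y z. br x (br y z) + br y (br z x) + br z (br x y) = 0)"

text \<open>Lower central series, indexed as in the paper: lcs br 1 = l, lcs br (k+1) = [l, lcs br k].
  (The index 0 is not used; it is set to l as well.)\<close>
fun lcs :: "('l::real_vector \<Rightarrow> 'l \<Rightarrow> 'l) \<Rightarrow> nat \<Rightarrow> 'l set" where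
  "lcs br 0 = UNIV"
| "lcs br (Suc 0) = UNIV"
| "lcs br (Suc (Suc k)) = span {br x y | x y. y \<in> lcs br (Suc k)}"

definition lie_center :: "('l::real_vector \<Rightarrow> 'l \<Rightarrow> 'l) \<Rightarrow> 'l set" where
  "lie_center br = {z. \<forall>x. br x z = 0}"

definition lie_nilpotent :: "('l::real_vector \<Rightarrow> 'l \<Rightarrow> 'l) \<Rightarrow> bool" where
  "lie_nilpotent br \<longleftrightarrow> (\<exists>m. lcs br m = {0})"

text \<open>A finite-dimensional real vector space a is identified with R^n, whose elements are
  represented by functions v :: nat => real vanishing from index n on.\<close>

definition vsp :: "nat \<Rightarrow> (nat \<Rightarrow> real) set" where
  "vsp n = {v. \<forall>i\<ge>n. v i = 0}"

definition vzero :: "nat \<Rightarrow> real" where "vzero = (\<lambda>_. 0)"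

definition fsubspace :: "(nat \<Rightarrow> real) set \<Rightarrow> bool" where
  "fsubspace U \<longleftrightarrow> vzero \<in> U \<and> (\<forall>u\<in>U. \<forall>v\<in>U. (\<lambda>i. u i + v i) \<in> U) \<and>
     (\<forall>c. \<forall>u\<in>U. (\<lambda>i. c * u i) \<in> U)"

definition bform :: "nat \<Rightarrow> (nat \<Rightarrow> nat \<Rightarrow> real) \<Rightarrow> (nat \<Rightarrow> real) \<Rightarrow> (nat \<Rightarrow> real) \<Rightarrow> real" where
  "bform n Q v w = (\<Sum>i<n. \<Sum>j<n. v i * Q i j * w j)"

definition act :: "nat \<Rightarrow> ('l \<Rightarrow> nat \<Rightarrow> nat \<Rightarrow> real) \<Rightarrow> 'l \<Rightarrow> (nat \<Rightarrow> real) \<Rightarrow> (nat \<Rightarrow> real)" where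
  "act n R L v = (\<lambda>i. if i < n then (\<Sum>j<n. R L i j * v j) else 0)"

definition orth_module :: "('l::real_vector \<Rightarrow> 'l \<Rightarrow> 'l) \<Rightarrow> nat \<Rightarrow> (nat \<Rightarrow> nat \<Rightarrow> real)
    \<Rightarrow> ('l \<Rightarrow> nat \<Rightarrow> nat \<Rightarrow> real) \<Rightarrow> bool" where
  "orth_module br n Q R \<longleftrightarrow>
     (\<forall>i<n. \<forall>j<n. Q i j = Q j i) \<and>
     (\<forall>v\<in>vsp n. (\<forall>w\<in>vsp n. bform n Q v w = 0) \<longrightarrow> v = vzero) \<and>
     (\<forall>i<n. \<forall>j<n. linear (\<lambda>L. R L i j)) \<and>
     (\<forall>X Y. \<forall>v\<in>vsp n. act n R (br X Y) v =
         (\<lambda>i. act n R X (act n R Y v) i - act n R Y (act n R X v) i)) \<and>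
     (\<forall>L. \<forall>v\<in>vsp n. \<forall>w\<in>vsp n. bform n Q (act n R L v) w + bform n Q v (act n R L w) = 0)"

definition invariant_sub :: "nat \<Rightarrow> ('l \<Rightarrow> nat \<Rightarrow> nat \<Rightarrow> real) \<Rightarrow> (nat \<Rightarrow> real) set \<Rightarrow> bool" where
  "invariant_sub n R U \<longleftrightarrow> fsubspace U \<and> U \<subseteq> vsp n \<and> (\<forall>L. \<forall>u\<in>U. act n R L u \<in> U)"

text \<open>Semisimple = completely reducible: every invariant subspace has an invariant complement.\<close>
definition semisimple_module :: "nat \<Rightarrow> ('l \<Rightarrow> nat \<Rightarrow> nat \<Rightarrow> real) \<Rightarrow> bool" where
  "semisimple_module n R \<longleftrightarrow> (\<forall>U. invariant_sub n R U \<longrightarrow>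
     (\<exists>W. invariant_sub n R W \<and> U \<inter> W = {vzero} \<and>
          (\<forall>v\<in>vsp n. \<exists>u\<in>U. \<exists>w\<in>W. v = (\<lambda>i. u i + w i))))"

definition mod_invariants :: "nat \<Rightarrow> ('l \<Rightarrow> nat \<Rightarrow> nat \<Rightarrow> real) \<Rightarrow> (nat \<Rightarrow> real) set" where
  "mod_invariants n R = {A \<in> vsp n. \<forall>L. act n R L A = vzero}"

definition rho_kernel :: "nat \<Rightarrow> ('l \<Rightarrow> nat \<Rightarrow> nat \<Rightarrow> real) \<Rightarrow> 'l set" where
  "rho_kernel n R = {L. \<forall>v\<in>vsp n. act n R L v = vzero}"

definition cochain2 :: "nat \<Rightarrow> ('l::real_vector \<Rightarrow> 'l \<Rightarrow> nat \<Rightarrow> real) \<Rightarrow> bool" where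
  "cochain2 n \<alpha> \<longleftrightarrow> (\<forall>X Y. \<alpha> X Y \<in> vsp n) \<and> (\<forall>i. bilin (\<lambda>X Y. \<alpha> X Y i)) \<and>
     (\<forall>X. \<alpha> X X = vzero)"

definition cochain3 :: "('l::real_vector \<Rightarrow> 'l \<Rightarrow> 'l \<Rightarrow> real) \<Rightarrow> bool" where
  "cochain3 \<gamma> \<longleftrightarrow> (\<forall>Y Z. linear (\<lambda>X. \<gamma> X Y Z)) \<and> (\<forall>X Z. linear (\<lambda>Y. \<gamma> X Y Z)) \<and>
     (\<forall>X Y. linear (\<lambda>Z. \<gamma> X Y Z)) \<and>
     (\<forall>X Z. \<gamma> X X Z = 0) \<and> (\<forall>X Y. \<gamma> X Y Y = 0) \<and> (\<forall>X Y. \<gamma> X Y X = 0)"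

text \<open>Chevalley-Eilenberg differential of a 2-cochain with values in (rho,a).\<close>
definition d2 :: "('l \<Rightarrow> 'l \<Rightarrow> 'l) \<Rightarrow> nat \<Rightarrow> ('l \<Rightarrow> nat \<Rightarrow> nat \<Rightarrow> real) \<Rightarrow> ('l \<Rightarrow> 'l \<Rightarrow> nat \<Rightarrow> real)
    \<Rightarrow> 'l \<Rightarrow> 'l \<Rightarrow> 'l \<Rightarrow> nat \<Rightarrow> real" where
  "d2 br n R \<alpha> X Y Z = (\<lambda>i. act n R X (\<alpha> Y Z) i - act n R Y (\<alpha> X Z) i + act n R Z (\<alpha> X Y) i
      - \<alpha> (br X Y) Z i + \<alpha> (br X Z) Y i - \<alpha> (br Y Z) X i)"

text \<open>Chevalley-Eilenberg differential of a real 3-cochain (trivial module).\<close>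
definition d3 :: "('l \<Rightarrow> 'l \<Rightarrow> 'l) \<Rightarrow> ('l \<Rightarrow> 'l \<Rightarrow> 'l \<Rightarrow> real) \<Rightarrow> 'l \<Rightarrow> 'l \<Rightarrow> 'l \<Rightarrow> 'l \<Rightarrow> real" where
  "d3 br \<gamma> X0 X1 X2 X3 =
     - \<gamma> (br X0 X1) X2 X3 + \<gamma> (br X0 X2) X1 X3 - \<gamma> (br X0 X3) X1 X2
     - \<gamma> (br X1 X2) X0 X3 + \<gamma> (br X1 X3) X0 X2 - \<gamma> (br X2 X3) X0 X1"

text \<open>The 4-form \<langle>alpha \<and> beta\<rangle> (wedge with the shuffle convention, then contraction with the form).\<close>
definition wedge22 :: "nat \<Rightarrow> (nat \<Rightarrow> nat \<Rightarrow> real) \<Rightarrow> ('l \<Rightarrow> 'l \<Rightarrow> nat \<Rightarrow> real) \<Rightarrow> ('l \<Rightarrow> 'l \<Rightarrow> nat \<Rightarrow> real)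
    \<Rightarrow> 'l \<Rightarrow> 'l \<Rightarrow> 'l \<Rightarrow> 'l \<Rightarrow> real" where
  "wedge22 n Q \<alpha> \<beta> X0 X1 X2 X3 =
       bform n Q (\<alpha> X0 X1) (\<beta> X2 X3) - bform n Q (\<alpha> X0 X2) (\<beta> X1 X3)
     + bform n Q (\<alpha> X0 X3) (\<beta> X1 X2) + bform n Q (\<alpha> X1 X2) (\<beta> X0 X3)
     - bform n Q (\<alpha> X1 X3) (\<beta> X0 X2) + bform n Q (\<alpha> X2 X3) (\<beta> X0 X1)"

definition quad_cocycle :: "('l::real_vector \<Rightarrow> 'l \<Rightarrow> 'l) \<Rightarrow> nat \<Rightarrow> (nat \<Rightarrow> nat \<Rightarrow> real)
    \<Rightarrow> ('l \<Rightarrow> nat \<Rightarrow> nat \<Rightarrow> real) \<Rightarrow> ('l \<Rightarrow> 'l \<Rightarrow> nat \<Rightarrow> real) \<Rightarrow> ('l \<Rightarrow> 'l \<Rightarrow> 'l \<Rightarrow> real) \<Rightarrow> bool" where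
  "quad_cocycle br n Q R \<alpha> \<gamma> \<longleftrightarrow> cochain2 n \<alpha> \<and> cochain3 \<gamma> \<and>
     (\<forall>X Y Z. d2 br n R \<alpha> X Y Z = vzero) \<and>
     (\<forall>X0 X1 X2 X3. d3 br \<gamma> X0 X1 X2 X3 = (1/2) * wedge22 n Q \<alpha> \<alpha> X0 X1 X2 X3)"

definition lin_on :: "'l::real_vector set \<Rightarrow> ('l \<Rightarrow> real) \<Rightarrow> bool" where
  "lin_on W f \<longleftrightarrow> (\<forall>x\<in>W. \<forall>y\<in>W. f (x + y) = f x + f y) \<and> (\<forall>c. \<forall>x\<in>W. f (c *\<^sub>R x) = c * f x)"

definition lsub :: "('l::real_vector \<Rightarrow> 'l \<Rightarrow> 'l) \<Rightarrow> nat \<Rightarrow> ('l \<Rightarrow> nat \<Rightarrow> nat \<Rightarrow> real) \<Rightarrow> nat \<Rightarrow> 'l set" where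
  "lsub br n R k = (if k = 0 then lie_center br \<inter> rho_kernel n R
                    else lie_center br \<inter> lcs br (k + 1))"

definition cond_A :: "('l::real_vector \<Rightarrow> 'l \<Rightarrow> 'l) \<Rightarrow> nat \<Rightarrow> (nat \<Rightarrow> nat \<Rightarrow> real)
    \<Rightarrow> ('l \<Rightarrow> nat \<Rightarrow> nat \<Rightarrow> real) \<Rightarrow> ('l \<Rightarrow> 'l \<Rightarrow> nat \<Rightarrow> real) \<Rightarrow> ('l \<Rightarrow> 'l \<Rightarrow> 'l \<Rightarrow> real) \<Rightarrow> nat \<Rightarrow> bool" where
  "cond_A br n Q R \<alpha> \<gamma> k \<longleftrightarrow>
     (\<forall>L0 \<in> lsub br n R k.
        (\<exists>A0 \<in> vsp n. \<exists>Z0. lin_on (lcs br (k + 1)) Z0 \<and>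
            (\<forall>L. \<alpha> L L0 = vzero) \<and>
            (\<forall>L. \<forall>X \<in> lcs br (k + 1).
                \<gamma> L L0 X = - bform n Q A0 (\<alpha> L X) + Z0 (br L X)))
        \<longrightarrow> L0 = 0)"

text \<open>alpha applied to the kernel of the bracket map l \<otimes> l^(k+1) -> l; elements of the
  tensor product are written as finite sums of elementary tensors.\<close>
definition alpha_ker :: "('l::real_vector \<Rightarrow> 'l \<Rightarrow> 'l) \<Rightarrow> ('l \<Rightarrow> 'l \<Rightarrow> nat \<Rightarrow> real) \<Rightarrow> nat \<Rightarrow> (nat \<Rightarrow> real) set" where
  "alpha_ker br \<alpha> k = {(\<lambda>i. \<Sum>j<m. \<alpha> (x j) (w j) i) | (m::nat) (x::nat \<Rightarrow> 'l) (w::nat \<Rightarrow> 'l).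
       (\<forall>j<m. w j \<in> lcs br (k + 1)) \<and> (\<Sum>j<m. br (x j) (w j)) = 0}"

definition nondeg_sub :: "nat \<Rightarrow> (nat \<Rightarrow> nat \<Rightarrow> real) \<Rightarrow> (nat \<Rightarrow> real) set \<Rightarrow> bool" where
  "nondeg_sub n Q S \<longleftrightarrow> (\<forall>s\<in>S. (\<forall>t\<in>S. bform n Q s t = 0) \<longrightarrow> s = vzero)"

definition cond_B :: "('l::real_vector \<Rightarrow> 'l \<Rightarrow> 'l) \<Rightarrow> nat \<Rightarrow> (nat \<Rightarrow> nat \<Rightarrow> real)
    \<Rightarrow> ('l \<Rightarrow> 'l \<Rightarrow> nat \<Rightarrow> real) \<Rightarrow> nat \<Rightarrow> bool" where
  "cond_B br n Q \<alpha> k \<longleftrightarrow> nondeg_sub n Q (alpha_ker br \<alpha> k)"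

text \<open>l is admissible: some semisimple orthogonal module a admits a class in H^2_Q(l,a) having a
  representative (alpha,gamma) with alpha(l,l) \<subseteq> a^l satisfying (A_k),(B_k) for 0 \<le> k \<le> m,
  where l^(m+2) = 0 (for larger k both conditions hold trivially, so all k are required).\<close>
definition lie_admissible :: "('l::real_vector \<Rightarrow> 'l \<Rightarrow> 'l) \<Rightarrow> bool" where
  "lie_admissible br \<longleftrightarrow>
     (\<exists>n Q R \<alpha> \<gamma>. orth_module br n Q R \<and> semisimple_module n R \<and>
        quad_cocycle br n Q R \<alpha> \<gamma> \<and>
        (\<forall>X Y. \<alpha> X Y \<in> mod_invariants n R) \<and>
        (\<forall>m. lcs br (m + 2) = {0} \<longrightarrow> (\<forall>k\<le>m. cond_A br n Q R \<alpha> \<gamma> k \<and> cond_B br n Q \<alpha> k)))"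

end

theory Submission
  imports Defs
begin

lemma bilin_anti:
  fixes f :: "'a::real_vector \<Rightarrow> 'a \<Rightarrow> 'b::real_vector"
  assumes "bilin f" "\<And>x. f x x = 0"
  shows "f x y = - f y x"
proof -
  have l1: "linear (\<lambda>y. f z y)" for z using assms(1) unfolding bilin_def by blast
  have l2: "linear (\<lambda>x. f x z)" for z using assms(1) unfolding bilin_def by blast
  have "0 = f (x + y) (x + y)" using assms(2) by simp
  also have "\<dots> = f x (x + y) + f y (x + y)" using linear_add[OF l2] by simp
  also have "\<dots> = f x x + f x y + (f y x + f y y)" using linear_add[OF l1] by simp
  also have "\<dots> = f x y + f y x" using assms(2) by simp
  finally show ?thesis by (simp add: eq_neg_iff_add_eq_0)
qed

lemma c3_12:
  assumes "cochain3 \<gamma>"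
  shows "\<gamma> X Y Z = - \<gamma> Y X Z"
proof -
  have l1: "linear (\<lambda>X. \<gamma> X Y Z)" for Y Z using assms unfolding cochain3_def by blast
  have l2: "linear (\<lambda>Y. \<gamma> X Y Z)" for X Z using assms unfolding cochain3_def by blast
  have a: "\<gamma> X X Z = 0" for X Z using assms unfolding cochain3_def by blast
  have "0 = \<gamma> (X + Y) (X + Y) Z" using a by simp
  also have "\<dots> = \<gamma> X (X + Y) Z + \<gamma> Y (X + Y) Z" using linear_add[OF l1] by simp
  also have "\<dots> = \<gamma> X X Z + \<gamma> X Y Z + (\<gamma> Y X Z + \<gamma> Y Y Z)" using linear_add[OF l2] by simp
  also have "\<dots> = \<gamma> X Y Z + \<gamma> Y X Z" using a by simp
  finally show ?thesis by linarith
qed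

lemma c3_13:
  assumes "cochain3 \<gamma>"
  shows "\<gamma> X Y Z = - \<gamma> Z Y X"
proof -
  have l1: "linear (\<lambda>X. \<gamma> X Y Z)" for Y Z using assms unfolding cochain3_def by blast
  have l3: "linear (\<lambda>Z. \<gamma> X Y Z)" for X Y using assms unfolding cochain3_def by blast
  have a: "\<gamma> X Y X = 0" for X Y using assms unfolding cochain3_def by blast
  have "0 = \<gamma> (X + Z) Y (X + Z)" using a by simp
  also have "\<dots> = \<gamma> X Y (X + Z) + \<gamma> Z Y (X + Z)" using linear_add[OF l1] by simp
  also have "\<dots> = \<gamma> X Y X + \<gamma> X Y Z + (\<gamma> Z Y X + \<gamma> Z Y Z)" using linear_add[OF l3] by simp
  also have "\<dots> = \<gamma> X Y Z + \<gamma> Z Y X" using a by simp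
  finally show ?thesis by linarith
qed

lemma c3_0:
  assumes "cochain3 \<gamma>"
  shows "\<gamma> 0 Y Z = 0"
proof -
  have l1: "linear (\<lambda>X. \<gamma> X Y Z)" using assms unfolding cochain3_def by blast
  show ?thesis using linear_0[OF l1] by simp
qed

lemma bform_sym:
  assumes "\<forall>i<n. \<forall>j<n. Q i j = Q j i"
  shows "bform n Q v w = bform n Q w v"
  unfolding bform_def
  apply (subst sum.swap)
  apply (intro sum.cong refl)
  using assms by (simp add: mult.commute mult.left_commute)

lemma bform_vzero2 [simp]: "bform n Q v vzero = 0"
  by (simp add: bform_def vzero_def)

lemma bform_vzero1 [simp]: "bform n Q vzero v = 0"
  by (simp add: bform_def vzero_def)

lemma bform_neg1: "bform n Q (\<lambda>i. - v i) w = - bform n Q v w"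
  by (simp add: bform_def sum_negf)

lemma bform_neg2: "bform n Q v (\<lambda>i. - w i) = - bform n Q v w"
  by (simp add: bform_def sum_negf)

lemma bform_diff2: "bform n Q v (\<lambda>i. u i - w i) = bform n Q v u - bform n Q v w"
  by (simp add: bform_def algebra_simps sum_subtractf)

lemma bform_lin:
  assumes "\<And>j. linear (\<lambda>X. w X j)"
  shows "linear (\<lambda>X. bform n Q A (w X))"
proof (rule linearI)
  fix b1 b2
  have "w (b1 + b2) j = w b1 j + w b2 j" for j using linear_add[OF assms] by simp
  then show "bform n Q A (w (b1 + b2)) = bform n Q A (w b1) + bform n Q A (w b2)"
    by (simp add: bform_def algebra_simps sum.distrib)
next
  fix r b
  have "w (r *\<^sub>R b) j = r * w b j" for j using linear_scale[OF assms] by simp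
  then show "bform n Q A (w (r *\<^sub>R b)) = r *\<^sub>R bform n Q A (w b)"
    by (simp add: bform_def algebra_simps sum_distrib_left)
qed

lemma lcs_zero_Suc:
  assumes "bilin br" "lcs br m = {0}"
  shows "lcs br (Suc m) = {0}"
proof (cases m)
  case 0
  then show ?thesis using assms by simp
next
  case (Suc k)
  have l1: "linear (\<lambda>y. br z y)" for z using assms(1) unfolding bilin_def by blast
  have "{br x y | x y. y \<in> lcs br (Suc k)} = {0}"
    using assms(2) Suc linear_0[OF l1] by auto
  then show ?thesis using Suc by simp
qed

lemma lcs_zero_add:
  assumes "bilin br" "lcs br m = {0}"
  shows "lcs br (m + j) = {0}"
proof (induction j)
  case 0
  then show ?case using assms by simp
next
  case (Suc j)
  then show ?case using lcs_zero_Suc[OF assms(1), of "m + j"] by simp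
qed

theorem lemma4:
  fixes br :: "'l::euclidean_space \<Rightarrow> 'l \<Rightarrow> 'l"
    and Lbar :: "'l set"
  assumes "lie_algebra br"
    and "lie_nilpotent br"
    and "dim (lcs br 2) = 2"
    and "lcs br 2 \<subseteq> lie_center br"
    and "lie_admissible br"
    and "subspace Lbar" and "dim Lbar = 3"
    and "span {br x y | x y. x \<in> Lbar \<and> y \<in> Lbar} = lcs br 2"
  shows "\<forall>L1 L2. (\<forall>x\<in>Lbar. br L1 x = 0) \<and> (\<forall>x\<in>Lbar. br L2 x = 0) \<longrightarrow> br L1 L2 = 0"
proof (intro allI impI)
  fix L1 L2
  assume H: "(\<forall>x\<in>Lbar. br L1 x = 0) \<and> (\<forall>x\<in>Lbar. br L2 x = 0)"
  then have h1: "\<And>x. x \<in> Lbar \<Longrightarrow> br L1 x = 0" and h2: "\<And>x. x \<in> Lbar \<Longrightarrow> br L2 x = 0"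
    by auto
  have bil: "bilin br" and alt: "\<And>x. br x x = 0"
    using assms(1) unfolding lie_algebra_def by auto
  have anti: "\<And>x y. br x y = - br y x" using bilin_anti[OF bil alt] .
  have brV: "\<And>x y. br x y \<in> lcs br 2"
    by (auto simp: numeral_2_eq_2 intro: span_base)
  have cent: "\<And>W x. W \<in> lcs br 2 \<Longrightarrow> br x W = 0"
    using assms(4) unfolding lie_center_def by auto
  have cent2: "\<And>W x. W \<in> lcs br 2 \<Longrightarrow> br W x = 0"
    using cent anti by (metis neg_equal_0_iff_equal)
  obtain n Q R \<alpha> \<gamma> where orth: "orth_module br n Q R" and qc: "quad_cocycle br n Q R \<alpha> \<gamma>"
    and inv: "\<forall>X Y. \<alpha> X Y \<in> mod_invariants n R"
    and adm: "\<forall>m. lcs br (m + 2) = {0} \<longrightarrow> (\<forall>k\<le>m. cond_A br n Q R \<alpha> \<gamma> k \<and> cond_B br n Q \<alpha> k)"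
    using assms(5) unfolding lie_admissible_def by blast
  have Qsym: "\<forall>i<n. \<forall>j<n. Q i j = Q j i" using orth unfolding orth_module_def by blast
  have c2: "cochain2 n \<alpha>" and c3: "cochain3 \<gamma>"
    and d2z: "\<And>X Y Z. d2 br n R \<alpha> X Y Z = vzero"
    and d3e: "\<And>X0 X1 X2 X3. d3 br \<gamma> X0 X1 X2 X3 = (1/2) * wedge22 n Q \<alpha> \<alpha> X0 X1 X2 X3"
    using qc unfolding quad_cocycle_def by auto
  have abil: "\<And>i. bilin (\<lambda>X Y. \<alpha> X Y i)" using c2 unfolding cochain2_def by blast
  have alin1: "\<And>Y i. linear (\<lambda>X. \<alpha> X Y i)" using abil unfolding bilin_def by blast
  have aalt: "\<And>X Y i. \<alpha> X Y i = - \<alpha> Y X i"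
  proof -
    fix X Y i
    have "\<And>x. \<alpha> x x i = 0" using c2 unfolding cochain2_def vzero_def by simp
    from bilin_anti[OF abil[of i] this] show "\<alpha> X Y i = - \<alpha> Y X i" .
  qed
  have act0: "\<And>X Y Z i. act n R X (\<alpha> Y Z) i = 0"
    using inv unfolding mod_invariants_def vzero_def by (auto dest!: fun_cong)
  have AL: "\<And>X Y Z i. \<alpha> (br X Y) Z i - \<alpha> (br X Z) Y i + \<alpha> (br Y Z) X i = 0"
  proof -
    fix X Y Z i
    have "d2 br n R \<alpha> X Y Z i = vzero i" using d2z by simp
    then show "\<alpha> (br X Y) Z i - \<alpha> (br X Z) Y i + \<alpha> (br Y Z) X i = 0"
      by (simp add: d2_def act0 vzero_def)
  qed
  have a0: "\<And>Y i. \<alpha> 0 Y i = 0" using linear_0[OF alin1] by simp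
  have F1: "\<And>W M i. W \<in> lcs br 2 \<Longrightarrow> (\<forall>x\<in>Lbar. br M x = 0) \<Longrightarrow> \<alpha> W M i = 0"
  proof -
    fix W M i
    assume W: "W \<in> lcs br 2" and M: "\<forall>x\<in>Lbar. br M x = 0"
    show "\<alpha> W M i = 0"
    proof (rule linear_eq_0_on_span[OF alin1[of M i]])
      show "W \<in> span {br x y | x y. x \<in> Lbar \<and> y \<in> Lbar}" using W assms(8) by simp
    next
      fix w assume "w \<in> {br x y | x y. x \<in> Lbar \<and> y \<in> Lbar}"
      then obtain x y where w: "w = br x y" and x: "x \<in> Lbar" and y: "y \<in> Lbar" by blast
      have "br x M = 0" "br y M = 0" using M x y anti by (metis neg_equal_0_iff_equal)+
      then show "\<alpha> w M i = 0" using AL[of x y M i] w a0 by simp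
    qed
  qed
  define L0 where "L0 = br L1 L2"
  define A where "A = \<alpha> L1 L2"
  have L0V: "L0 \<in> lcs br 2" unfolding L0_def by (rule brV)
  have F2: "\<And>L i. \<alpha> L L0 i = 0"
  proof -
    fix L i
    have "\<alpha> (br L1 L) L2 i = 0" "\<alpha> (br L2 L) L1 i = 0"
      using F1 brV H by blast+
    then have "\<alpha> L0 L i = 0" using AL[of L1 L2 L i] unfolding L0_def by simp
    then show "\<alpha> L L0 i = 0" using aalt[of L L0 i] by simp
  qed
  have F2': "\<And>L. \<alpha> L L0 = vzero" using F2 by (auto simp: vzero_def)
  have F1': "\<And>W. W \<in> lcs br 2 \<Longrightarrow> \<alpha> L1 W = vzero \<and> \<alpha> L2 W = vzero"
  proof -
    fix W assume W: "W \<in> lcs br 2"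
    have "\<alpha> L1 W i = 0 \<and> \<alpha> L2 W i = 0" for i
      using F1[OF W, of L1 i] F1[OF W, of L2 i] H aalt[of L1 W i] aalt[of L2 W i] by simp
    then show "\<alpha> L1 W = vzero \<and> \<alpha> L2 W = vzero" by (auto simp: vzero_def)
  qed
  have g0: "\<And>Y Z. \<gamma> 0 Y Z = 0" using c3_0[OF c3] .
  have bp: "\<And>x W. x \<in> Lbar \<Longrightarrow> W \<in> lcs br 2 \<Longrightarrow> \<gamma> L0 x W = - bform n Q A (\<alpha> x W)"
  proof -
    fix x W assume x: "x \<in> Lbar" and W: "W \<in> lcs br 2"
    have e: "d3 br \<gamma> L1 L2 x W = (1/2) * wedge22 n Q \<alpha> \<alpha> L1 L2 x W" by (rule d3e)
    have "d3 br \<gamma> L1 L2 x W = - \<gamma> L0 x W"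
      unfolding d3_def L0_def using h1[OF x] h2[OF x] cent[OF W] g0 by simp
    moreover have "wedge22 n Q \<alpha> \<alpha> L1 L2 x W = 2 * bform n Q A (\<alpha> x W)"
      unfolding wedge22_def A_def using F1'[OF W] bform_sym[OF Qsym] by simp
    ultimately show "\<gamma> L0 x W = - bform n Q A (\<alpha> x W)" using e by simp
  qed
  have ap: "\<And>x W. x \<in> Lbar \<Longrightarrow> W \<in> lcs br 2 \<Longrightarrow> \<gamma> W x L0 = bform n Q A (\<alpha> x W)"
    using bp c3_13[OF c3] by (metis minus_minus)
  have a1: "\<And>x y L. x \<in> Lbar \<Longrightarrow> y \<in> Lbar \<Longrightarrow>
      \<gamma> (br x y) L L0 = bform n Q A (\<alpha> y (br x L)) - bform n Q A (\<alpha> x (br y L))"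
  proof -
    fix x y L assume x: "x \<in> Lbar" and y: "y \<in> Lbar"
    have e: "d3 br \<gamma> x y L L0 = (1/2) * wedge22 n Q \<alpha> \<alpha> x y L L0" by (rule d3e)
    have "wedge22 n Q \<alpha> \<alpha> x y L L0 = 0"
      unfolding wedge22_def using F2' by simp
    moreover have "d3 br \<gamma> x y L L0 = - \<gamma> (br x y) L L0 + \<gamma> (br x L) y L0 - \<gamma> (br y L) x L0"
      unfolding d3_def using cent[OF L0V] g0 by simp
    ultimately have "\<gamma> (br x y) L L0 = \<gamma> (br x L) y L0 - \<gamma> (br y L) x L0" using e by simp
    then show "\<gamma> (br x y) L L0 = bform n Q A (\<alpha> y (br x L)) - bform n Q A (\<alpha> x (br y L))"
      using ap[OF y brV] ap[OF x brV] by simp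
  qed
  have cyc: "\<And>x y L. bform n Q A (\<alpha> y (br x L)) - bform n Q A (\<alpha> x (br y L))
      = - bform n Q A (\<alpha> (br x y) L)"
  proof -
    fix x y L
    have "(\<lambda>i. \<alpha> y (br x L) i - \<alpha> x (br y L) i) = (\<lambda>i. - \<alpha> (br x y) L i)"
    proof
      fix i
      show "\<alpha> y (br x L) i - \<alpha> x (br y L) i = - \<alpha> (br x y) L i"
        using AL[of x y L i] aalt[of y "br x L" i] aalt[of x "br y L" i] by linarith
    qed
    then have "bform n Q A (\<lambda>i. \<alpha> y (br x L) i - \<alpha> x (br y L) i) = - bform n Q A (\<alpha> (br x y) L)"
      using bform_neg2[of n Q A "\<alpha> (br x y) L"] by simp
    then show "bform n Q A (\<alpha> y (br x L)) - bform n Q A (\<alpha> x (br y L))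
      = - bform n Q A (\<alpha> (br x y) L)" using bform_diff2 by metis
  qed
  have sp: "\<And>W L. W \<in> lcs br 2 \<Longrightarrow> \<gamma> W L L0 + bform n Q A (\<alpha> W L) = 0"
  proof -
    fix W L assume W: "W \<in> lcs br 2"
    have glin: "linear (\<lambda>X. \<gamma> X L L0)" using c3 unfolding cochain3_def by blast
    have flin: "linear (\<lambda>W. \<gamma> W L L0 + bform n Q A (\<alpha> W L))"
      by (intro linear_compose_add glin bform_lin alin1)
    show "\<gamma> W L L0 + bform n Q A (\<alpha> W L) = 0"
    proof (rule linear_eq_0_on_span[OF flin])
      show "W \<in> span {br x y | x y. x \<in> Lbar \<and> y \<in> Lbar}" using W assms(8) by simp
    next
      fix w assume "w \<in> {br x y | x y. x \<in> Lbar \<and> y \<in> Lbar}"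
      then obtain x y where w: "w = br x y" and x: "x \<in> Lbar" and y: "y \<in> Lbar" by blast
      show "\<gamma> w L L0 + bform n Q A (\<alpha> w L) = 0" using a1[OF x y, of L] cyc[of y x L] w
        using cyc[of x y L] by simp
    qed
  qed
  obtain m0 where m0: "lcs br m0 = {0}" using assms(2) unfolding lie_nilpotent_def by blast
  have e3: "(m0 + 1) + 2 = m0 + 3" by simp
  have "lcs br ((m0 + 1) + 2) = {0}" unfolding e3 by (rule lcs_zero_add[OF bil m0])
  then have "\<forall>k\<le>m0 + 1. cond_A br n Q R \<alpha> \<gamma> k \<and> cond_B br n Q \<alpha> k"
    using adm by blast
  then have cA: "cond_A br n Q R \<alpha> \<gamma> 1" by simp
  have L0s: "L0 \<in> lsub br n R 1"
  proof -
    have "lsub br n R 1 = lie_center br \<inter> lcs br 2" unfolding lsub_def by (simp add: numeral_2_eq_2)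
    then show ?thesis using L0V assms(4) by blast
  qed
  have Avsp: "(\<lambda>i. - A i) \<in> vsp n" using c2 unfolding cochain2_def vsp_def A_def by auto
  have lin0: "lin_on (lcs br (1 + 1)) (\<lambda>_. 0)" unfolding lin_on_def by simp
  have main: "\<forall>L. \<forall>X \<in> lcs br (1 + 1).
      \<gamma> L L0 X = - bform n Q (\<lambda>i. - A i) (\<alpha> L X) + (\<lambda>_. 0) (br L X)"
  proof (intro allI ballI)
    fix L X assume X: "X \<in> lcs br (1 + 1)"
    then have XV: "X \<in> lcs br 2" by (simp add: numeral_2_eq_2)
    have "\<gamma> L L0 X = \<gamma> X L L0" using c3_12[OF c3] c3_13[OF c3] by (metis minus_minus)
    also have "\<dots> = - bform n Q A (\<alpha> X L)" using sp[OF XV, of L] by simp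
    also have "\<alpha> X L = (\<lambda>i. - \<alpha> L X i)" by (rule ext) (rule aalt)
    finally show "\<gamma> L L0 X = - bform n Q (\<lambda>i. - A i) (\<alpha> L X) + (\<lambda>_. 0) (br L X)"
      by (simp add: bform_neg1 bform_neg2)
  qed
  have "L0 = 0"
    using cA L0s Avsp lin0 F2' main unfolding cond_A_def by blast
  then show "br L1 L2 = 0" unfolding L0_def .
qed

end
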